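(* A curve $u\in C^1(\mathbb{R}/\mathbb{Z},\mathbb{R}^n)$ is injective and regular (i.e. $\min_{\mathbb{R}/\mathbb{Z}}|u'|>0$) if and only if $\mathrm{bil}(u)<\infty$. Moreover, if $\mathrm{bil}(u)<\infty$, then $\mathrm{bil}(\tilde u)\le2\,\mathrm{bil}(u)$ for every $\tilde u\in C^1(\mathbb{R}/\mathbb{Z},\mathbb{R}^n)$ with \[\|(\tilde u-u)'\|_{L^\infty}\le\frac1{2\,\mathrm{bil}(u)}.\]
   Context: $\mathrm{bil}(u)=\sup_{x,y\in\mathbb{R}/\mathbb{Z},\,x\ne y}\frac{|x-y|}{|u(x)-u(y)|}$, where $|x-y|=\min_{k\in\mathbb{Z}}|x-y-k|$ is the distance in $\mathbb{R}/\mathbb{Z}$. *)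

theory Defs
  imports "HOL-Analysis.Analysis" "HOL-Library.Extended_Real"
begin

text \<open>Curves on R/Z are represented as 1-periodic functions on the reals.\<close>

definition periodic1 :: "(real \<Rightarrow> 'a) \<Rightarrow> bool" where
  "periodic1 u \<longleftrightarrow> (\<forall>t. u (t + 1) = u t)"

definition cdist :: "real \<Rightarrow> real \<Rightarrow> real" where
  "cdist x y = (INF k\<in>(\<int>::real set). \<bar>x - y - k\<bar>)"

definition C1_closed_curve :: "(real \<Rightarrow> 'a::euclidean_space) \<Rightarrow> bool" where
  "C1_closed_curve u \<longleftrightarrow> periodic1 u \<and> (\<forall>t. u differentiable (at t))
     \<and> continuous_on UNIV (\<lambda>t. vector_derivative u (at t))"

definition bil :: "(real \<Rightarrow> 'a::real_normed_vector) \<Rightarrow> ereal" where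
  "bil u = (SUP (x, y)\<in>{(x, y). cdist x y \<noteq> 0}. (if u x = u y then \<infinity> else ereal (cdist x y / norm (u x - u y))))"

definition inj_circle :: "(real \<Rightarrow> 'a) \<Rightarrow> bool" where
  "inj_circle u \<longleftrightarrow> (\<forall>x y. u x = u y \<longrightarrow> cdist x y = 0)"

end

theory Submission
  imports Defs
begin


lemma cdist_bdd: "bdd_below ((\<lambda>k. \<bar>x - y - k\<bar>) ` (\<int>::real set))"
  by (rule bdd_belowI[of _ 0]) auto

lemma cdist_nonneg: "cdist x y \<ge> 0"
  unfolding cdist_def by (rule cINF_greatest) (auto intro: Ints_0)

lemma cdist_le: "k \<in> \<int> \<Longrightarrow> cdist x y \<le> \<bar>x - y - k\<bar>"
  unfolding cdist_def by (rule cINF_lower[OF cdist_bdd])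

lemma cdist_less_ex: assumes "cdist x y < d" shows "\<exists>k\<in>\<int>. \<bar>x - y - k\<bar> < d"
  using assms unfolding cdist_def by (subst (asm) cINF_less_iff[OF _ cdist_bdd]) (auto intro: Ints_0)

lemma cdist_frac1: "cdist x y \<le> frac (y - x)"
proof -
  have "cdist x y \<le> \<bar>x - y - of_int (- floor (y - x))\<bar>" by (rule cdist_le) auto
  also have "\<dots> = frac (y - x)" using of_int_floor_le[of "y-x"] unfolding frac_def by linarith
  finally show ?thesis .
qed

lemma cdist_frac2: "cdist x y \<le> 1 - frac (y - x)"
proof -
  have "cdist x y \<le> \<bar>x - y - of_int (- floor (y - x) - 1)\<bar>" by (rule cdist_le) auto
  also have "\<dots> = 1 - frac (y - x)" using frac_lt_1[of "y-x"] by (simp add: frac_def)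
  finally show ?thesis .
qed

lemma cdist_small: assumes "\<bar>h\<bar> \<le> 1/2" shows "\<bar>h\<bar> \<le> cdist (t + h) t"
  unfolding cdist_def
proof (rule cINF_greatest)
  fix k :: real assume "k \<in> \<int>"
  then obtain n where k: "k = of_int n" by (auto elim: Ints_cases)
  show "\<bar>h\<bar> \<le> \<bar>t + h - t - k\<bar>"
  proof (cases "n = 0")
    case False
    then have "\<bar>k\<bar> \<ge> 1" using k by linarith
    then show ?thesis using assms by linarith
  qed (simp add: k)
qed (auto intro: Ints_0)

lemma periodic_int: assumes "periodic1 u" "k \<in> \<int>" shows "u (t + k) = u t"
proof -
  have pos: "u (t + real n) = u t" for t n
  proof (induction n arbitrary: t)
    case (Suc n)
    have "u (t + real (Suc n)) = u ((t + real n) + 1)" by (simp add: algebra_simps)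
    also have "\<dots> = u (t + real n)" using assms(1) unfolding periodic1_def by blast
    finally show ?case using Suc by simp
  qed simp
  obtain n where k: "k = of_int n" using assms(2) by (auto elim: Ints_cases)
  show ?thesis
  proof (cases "n \<ge> 0")
    case True
    then have "k = real (nat n)" using k by simp
    then show ?thesis using pos by simp
  next
    case False
    then have "k = - real (nat (-n))" using k by simp
    then show ?thesis using pos[of "t + k" "nat (-n)"] by simp
  qed
qed

lemma mvt_bound:
  fixes f :: "real \<Rightarrow> 'a::real_normed_vector"
  assumes "convex S" "\<And>s. s \<in> S \<Longrightarrow> (f has_vector_derivative f' s) (at s)"
    "\<And>s. s \<in> S \<Longrightarrow> norm (f' s) \<le> B" "x \<in> S" "y \<in> S"
  shows "norm (f x - f y) \<le> B * \<bar>x - y\<bar>"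
proof -
  have "norm (f x - f y) \<le> B * norm (x - y)"
  proof (rule differentiable_bound[OF assms(1), where f' = "\<lambda>s h. h *\<^sub>R f' s"])
    fix s assume "s \<in> S"
    then show "(f has_derivative (\<lambda>h. h *\<^sub>R f' s)) (at s within S)"
      using assms(2) unfolding has_vector_derivative_def by (blast intro: has_derivative_at_withinI)
    have "onorm (\<lambda>h::real. h *\<^sub>R f' s) = onorm (\<lambda>h::real. h) * norm (f' s)"
      by (rule onorm_scaleR_left) (rule bounded_linear_ident)
    also have "\<dots> = norm (f' s)" using onorm_id[where 'a=real] by (simp add: id_def)
    finally show "onorm (\<lambda>h. h *\<^sub>R f' s) \<le> B" using assms(3) \<open>s \<in> S\<close> by simp
  qed (use assms in auto)
  then show ?thesis by simp
qed



lemma bil_ge: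
  assumes "cdist x y \<noteq> 0"
  shows "(if u x = u y then \<infinity> else ereal (cdist x y / norm (u x - u y))) \<le> bil u"
  unfolding bil_def by (rule SUP_upper2[of "(x,y)"]) (use assms in auto)

lemma bil_le:
  assumes "\<And>x y. cdist x y \<noteq> 0 \<Longrightarrow> u x \<noteq> u y \<and> cdist x y \<le> C * norm (u x - u y)"
  shows "bil u \<le> ereal C"
  unfolding bil_def
proof (rule SUP_least)
  fix p assume "p \<in> {(x, y). cdist x y \<noteq> 0}"
  then obtain x y where p: "p = (x,y)" "cdist x y \<noteq> 0" by auto
  with assms have "u x \<noteq> u y" "cdist x y \<le> C * norm (u x - u y)" by auto
  then have "cdist x y / norm (u x - u y) \<le> C" by (simp add: divide_le_eq)
  then show "(case p of (x, y) \<Rightarrow> if u x = u y then \<infinity> else ereal (cdist x y / norm (u x - u y))) \<le> ereal C"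
    using p \<open>u x \<noteq> u y\<close> by simp
qed

lemma bil_pos: "bil u > 0"
proof -
  have c: "1/2 \<le> cdist (0 + 1/2) 0" using cdist_small[of "1/2" 0] by simp
  then have "cdist (1/2) 0 \<noteq> 0" by simp
  from bil_ge[OF this, of u] have le: "(if u (1/2) = u 0 then \<infinity> else ereal (cdist (1/2) 0 / norm (u (1/2) - u 0))) \<le> bil u" .
  show ?thesis
  proof (cases "u (1/2) = u 0")
    case True then show ?thesis using le by simp
  next
    case False
    then have "0 < cdist (1/2) 0 / norm (u (1/2) - u 0)" using c by simp
    then have z: "0 < ereal (cdist (1/2) 0 / norm (u (1/2) - u 0))" by simp
    show ?thesis using less_le_trans[OF z] le False by simp
  qed
qed

lemma bil_finite:
  assumes "bil u < \<infinity>"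
  obtains b where "bil u = ereal b" "b > 0"
    "\<And>x y. cdist x y \<noteq> 0 \<Longrightarrow> u x \<noteq> u y \<and> cdist x y \<le> b * norm (u x - u y)"
proof -
  have p: "bil u > 0" by (rule bil_pos)
  define b where "b = real_of_ereal (bil u)"
  have e: "bil u = ereal b" using assms p unfolding b_def by (cases "bil u") auto
  have "b > 0" using p e by simp
  moreover have "u x \<noteq> u y \<and> cdist x y \<le> b * norm (u x - u y)" if "cdist x y \<noteq> 0" for x y
  proof -
    note le = bil_ge[OF that, of u]
    have ne: "u x \<noteq> u y" using le e by (auto split: if_splits)
    then have "cdist x y / norm (u x - u y) \<le> b" using le e by simp
    then show ?thesis using ne by (simp add: divide_le_eq mult.commute)
  qed
  ultimately show ?thesis using that e by blast
qed

lemma deriv_lower: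
  fixes u :: "real \<Rightarrow> 'a::real_normed_vector"
  assumes der: "(u has_vector_derivative D) (at t)" and b: "b > 0"
    and lb: "\<And>h. h \<noteq> 0 \<Longrightarrow> \<bar>h\<bar> \<le> 1/2 \<Longrightarrow> \<bar>h\<bar> \<le> b * norm (u (t + h) - u t)"
  shows "1 / b \<le> norm D"
proof (rule field_le_epsilon)
  fix e :: real assume e: "e > 0"
  have "((\<lambda>y. ((u y - u t) - (y - t) *\<^sub>R D) /\<^sub>R norm (y - t)) \<longlongrightarrow> 0) (at t)"
    using der unfolding has_vector_derivative_def has_derivative_at_within by simp
  then have "\<forall>\<^sub>F y in at t. norm (((u y - u t) - (y - t) *\<^sub>R D) /\<^sub>R norm (y - t)) < e"
    using e b by (auto simp: tendsto_iff dist_norm)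
  moreover have "\<forall>\<^sub>F y in at t. y \<noteq> t \<and> dist y t < 1/2"
    unfolding eventually_at by (rule exI[of _ "1/2"]) auto
  ultimately have "\<forall>\<^sub>F y in at t. norm (((u y - u t) - (y - t) *\<^sub>R D) /\<^sub>R norm (y - t)) < e \<and> y \<noteq> t \<and> dist y t < 1/2"
    by (rule eventually_conj)
  then obtain y where y: "norm (((u y - u t) - (y - t) *\<^sub>R D) /\<^sub>R norm (y - t)) < e" "y \<noteq> t" "dist y t < 1/2"
    using eventually_happens'[OF at_neq_bot] by blast
  define h where "h = y - t"
  have h0: "\<bar>h\<bar> > 0" using y(2) h_def by simp
  have yh: "y = t + h" using h_def by simp
  have "norm ((u (t+h) - u t) - h *\<^sub>R D) < e * \<bar>h\<bar>"
  proof -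
    have "norm ((u (t+h) - u t) - h *\<^sub>R D) / \<bar>h\<bar> < e"
      using y(1) h0 unfolding yh by (simp add: divide_inverse mult.commute)
    then show ?thesis using h0 by (simp add: pos_divide_less_eq)
  qed
  moreover have "norm (u (t+h) - u t) \<le> norm ((u (t+h) - u t) - h *\<^sub>R D) + \<bar>h\<bar> * norm D"
    using norm_triangle_ineq[of "(u (t+h) - u t) - h *\<^sub>R D" "h *\<^sub>R D"] by simp
  moreover have "\<bar>h\<bar> \<le> b * norm (u (t + h) - u t)" using lb[of h] y h_def by (simp add: dist_real_def)
  ultimately have "norm (u (t+h) - u t) < e * \<bar>h\<bar> + \<bar>h\<bar> * norm D" and hb: "\<bar>h\<bar> \<le> b * norm (u (t + h) - u t)"
    by linarith+
  then have "b * norm (u (t+h) - u t) < b * (e * \<bar>h\<bar> + \<bar>h\<bar> * norm D)" using b by simp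
  with hb have "\<bar>h\<bar> < b * (e * \<bar>h\<bar> + \<bar>h\<bar> * norm D)" by linarith
  also have "\<dots> = \<bar>h\<bar> * (b * (e + norm D))" using b by (simp add: field_simps)
  finally have "1 < b * (e + norm D)" using h0 by simp
  then have "1 / b < e + norm D" using b by (simp add: field_simps)
  then show "1 / b \<le> norm D + e" by simp
qed



lemma C1_deriv:
  assumes "C1_closed_curve u"
  shows "(u has_vector_derivative vector_derivative u (at t)) (at t)"
  using assms unfolding C1_closed_curve_def by (simp add: vector_derivative_works[symmetric])

lemma lip_cdist:
  fixes w :: "real \<Rightarrow> 'a::real_normed_vector"
  assumes per: "periodic1 w" and der: "\<And>t. (w has_vector_derivative w' t) (at t)"
    and bd: "\<And>t. norm (w' t) \<le> B" and B: "B > 0"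
  shows "norm (w x - w y) \<le> B * cdist x y"
proof (rule ccontr)
  assume "\<not> ?thesis"
  then have "cdist x y < norm (w x - w y) / B" using B by (simp add: field_simps)
  then obtain k where k: "k \<in> \<int>" "\<bar>x - y - k\<bar> < norm (w x - w y) / B" using cdist_less_ex by blast
  have "w (y + k) = w y" using periodic_int[OF per k(1)] .
  moreover have "norm (w x - w (y + k)) \<le> B * \<bar>x - (y + k)\<bar>"
    by (rule mvt_bound[where S=UNIV and f' = w']) (use der bd in auto)
  ultimately have "norm (w x - w y) \<le> B * \<bar>x - y - k\<bar>" by (simp add: algebra_simps)
  with k(2) B show False by (simp add: field_simps)
qed

lemma partC:
  fixes u v :: "real \<Rightarrow> 'n::euclidean_space"
  assumes u: "C1_closed_curve u" and fin: "bil u < \<infinity>" and v: "C1_closed_curve v"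
    and sup: "(SUP t. ereal (norm (vector_derivative (\<lambda>s. v s - u s) (at t))))
                 \<le> ereal (1 / (2 * real_of_ereal (bil u)))"
  shows "bil v \<le> 2 * bil u"
proof -
  obtain b where b: "bil u = ereal b" "b > 0"
    and bu: "\<And>x y. cdist x y \<noteq> 0 \<Longrightarrow> u x \<noteq> u y \<and> cdist x y \<le> b * norm (u x - u y)"
    using bil_finite[OF fin] by blast
  define w where "w = (\<lambda>s. v s - u s)"
  have per: "periodic1 w" using u v unfolding w_def C1_closed_curve_def periodic1_def by simp
  have dw: "w differentiable (at t)" for t
    using u v unfolding w_def C1_closed_curve_def by (simp add: differentiable_diff)
  have der: "(w has_vector_derivative vector_derivative w (at t)) (at t)" for t
    using dw by (simp add: vector_derivative_works[symmetric])
  have bd: "norm (vector_derivative w (at t)) \<le> 1 / (2 * b)" for t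
  proof -
    have "ereal (norm (vector_derivative w (at t))) \<le> (SUP t. ereal (norm (vector_derivative w (at t))))"
      by (rule SUP_upper) simp
    also have "\<dots> \<le> ereal (1 / (2 * b))" using sup b unfolding w_def by simp
    finally show ?thesis by simp
  qed
  have lw: "norm (w x - w y) \<le> 1 / (2 * b) * cdist x y" for x y
    by (rule lip_cdist[OF per der bd]) (use b in simp)
  have "bil v \<le> ereal (2 * b)"
  proof (rule bil_le)
    fix x y assume c: "cdist x y \<noteq> 0"
    have c0: "cdist x y > 0" using c cdist_nonneg[of x y] by simp
    have "v x - v y = (u x - u y) + (w x - w y)" unfolding w_def by simp
    then have "norm (v x - v y) \<ge> norm (u x - u y) - norm (w x - w y)"
      by (metis norm_diff_ineq diff_minus_eq_add norm_minus_cancel)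
    moreover have "cdist x y / b \<le> norm (u x - u y)" using bu[OF c] b by (simp add: divide_le_eq mult.commute)
    moreover have "norm (w x - w y) \<le> cdist x y / (2 * b)" using lw[of x y] by simp
    ultimately have "norm (v x - v y) \<ge> cdist x y / b - cdist x y / (2 * b)" by linarith
    also have "cdist x y / b - cdist x y / (2 * b) = cdist x y / (2 * b)" using b by (simp add: field_simps)
    finally have h: "cdist x y / (2 * b) \<le> norm (v x - v y)" .
    then have "cdist x y \<le> 2 * b * norm (v x - v y)" using b by (simp add: divide_le_eq mult.commute)
    moreover have "v x \<noteq> v y" using h c0 b by (auto simp: divide_le_0_iff)
    ultimately show "v x \<noteq> v y \<and> cdist x y \<le> 2 * b * norm (v x - v y)" by simp
  qed
  then show ?thesis using b by simp
qed

lemma partA: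
  fixes u :: "real \<Rightarrow> 'n::euclidean_space"
  assumes u: "C1_closed_curve u" and fin: "bil u < \<infinity>"
  shows "inj_circle u \<and> (INF t. norm (vector_derivative u (at t))) > 0"
proof -
  obtain b where b: "bil u = ereal b" "b > 0"
    and bu: "\<And>x y. cdist x y \<noteq> 0 \<Longrightarrow> u x \<noteq> u y \<and> cdist x y \<le> b * norm (u x - u y)"
    using bil_finite[OF fin] by blast
  have "inj_circle u" unfolding inj_circle_def using bu by blast
  moreover have "1 / b \<le> norm (vector_derivative u (at t))" for t
  proof (rule deriv_lower[OF C1_deriv[OF u] b(2)])
    fix h :: real assume h: "h \<noteq> 0" "\<bar>h\<bar> \<le> 1/2"
    have "\<bar>h\<bar> \<le> cdist (t + h) t" using cdist_small[OF h(2)] .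
    moreover have "cdist (t + h) t \<noteq> 0" using calculation h by linarith
    ultimately show "\<bar>h\<bar> \<le> b * norm (u (t + h) - u t)" using bu by force
  qed
  then have "1 / b \<le> (INF t. norm (vector_derivative u (at t)))"
    by (intro cINF_greatest) auto
  then have "(INF t. norm (vector_derivative u (at t))) > 0" using b(2)
    by (meson less_le_trans zero_less_divide_1_iff)
  ultimately show ?thesis by blast
qed



lemma cdist_lower: assumes "\<delta> \<le> h" "h \<le> 1 - \<delta>" shows "\<delta> \<le> cdist x (x + h)"
  unfolding cdist_def
proof (rule cINF_greatest)
  fix k :: real assume "k \<in> \<int>"
  then obtain n where k: "k = of_int n" by (auto elim: Ints_cases)
  show "\<delta> \<le> \<bar>x - (x + h) - k\<bar>"
  proof (cases "n \<ge> 0")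
    case True then have "k \<ge> 0" using k by simp
    then show ?thesis using assms by linarith
  next
    case False then have "k \<le> -1" using k by simp
    then show ?thesis using assms by linarith
  qed
qed (auto intro: Ints_0)

lemma short_range:
  fixes u :: "real \<Rightarrow> 'n::real_normed_vector"
  assumes der: "\<And>t. (u has_vector_derivative u' t) (at t)"
    and m: "\<And>t. m \<le> norm (u' t)"
    and uc: "\<And>s b. s \<in> {-1..2} \<Longrightarrow> b \<in> {-1..2} \<Longrightarrow> \<bar>s - b\<bar> \<le> \<delta> \<Longrightarrow> norm (u' s - u' b) \<le> m / 2"
    and a: "a \<in> {-1..2}" and bb: "b \<in> {-1..2}" and ab: "\<bar>a - b\<bar> \<le> \<delta>"
  shows "m / 2 * \<bar>a - b\<bar> \<le> norm (u a - u b)"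
proof -
  define g where "g = (\<lambda>s. u s - s *\<^sub>R u' b)"
  define S where "S = {min a b .. max a b}"
  have "norm (g a - g b) \<le> m / 2 * \<bar>a - b\<bar>"
  proof (rule mvt_bound[where S=S and f'="\<lambda>s. u' s - u' b"])
    show "convex S" unfolding S_def by simp
    fix s assume s: "s \<in> S"
    show "(g has_vector_derivative u' s - u' b) (at s)"
      unfolding g_def using der[of s]
      by (auto intro!: derivative_eq_intros)
    have "s \<in> {-1..2}" using s a bb unfolding S_def by auto
    moreover have "\<bar>s - b\<bar> \<le> \<delta>" using s ab unfolding S_def by auto
    ultimately show "norm (u' s - u' b) \<le> m / 2" using uc bb by blast
  qed (auto simp: S_def)
  moreover have "g a - g b = (u a - u b) - (a - b) *\<^sub>R u' b" unfolding g_def by (simp add: algebra_simps)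
  moreover have "norm ((a - b) *\<^sub>R u' b) \<ge> \<bar>a - b\<bar> * m" using m[of b]
    by (simp add: mult_left_mono)
  moreover have "norm ((a - b) *\<^sub>R u' b) \<le> norm (u a - u b) + norm ((u a - u b) - (a - b) *\<^sub>R u' b)"
    using norm_triangle_sub[of "(a - b) *\<^sub>R u' b" "u a - u b"] by (simp add: norm_minus_commute)
  ultimately have "\<bar>a - b\<bar> * m \<le> norm (u a - u b) + m / 2 * \<bar>a - b\<bar>" by simp
  then show ?thesis by (simp add: field_simps)
qed



lemma partB:
  fixes u :: "real \<Rightarrow> 'n::euclidean_space"
  assumes u: "C1_closed_curve u" and inj: "inj_circle u"
    and mpos: "(INF t. norm (vector_derivative u (at t))) > 0"
  shows "bil u < \<infinity>"
proof -
  define u' where "u' = (\<lambda>t. vector_derivative u (at t))"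
  define m where "m = (INF t. norm (u' t))"
  have m0: "m > 0" using mpos unfolding m_def u'_def .
  have mle: "m \<le> norm (u' t)" for t
    unfolding m_def by (rule cINF_lower) (auto intro: bdd_belowI[of _ 0])
  have der: "(u has_vector_derivative u' t) (at t)" for t
    unfolding u'_def by (rule C1_deriv[OF u])
  have per: "periodic1 u" using u unfolding C1_closed_curve_def by simp
  have contu: "continuous_on UNIV u"
    using u unfolding C1_closed_curve_def
    by (auto intro!: continuous_at_imp_continuous_on differentiable_imp_continuous_within)
  have cu': "continuous_on {-1..2} u'"
    using u unfolding C1_closed_curve_def u'_def by (auto intro: continuous_on_subset)
  then have "uniformly_continuous_on {-1..2::real} u'"
    by (rule compact_uniformly_continuous) simp
  then obtain d0 where d0: "d0 > 0"
    and d0c: "\<And>s b. s \<in> {-1..2} \<Longrightarrow> b \<in> {-1..2} \<Longrightarrow> dist s b < d0 \<Longrightarrow> dist (u' s) (u' b) < m / 2"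
    using \<open>uniformly_continuous_on {-1..2::real} u'\<close>[unfolded uniformly_continuous_on_def, rule_format, of "m/2"] m0
    by auto
  define \<delta> where "\<delta> = min (d0 / 2) (1/2)"
  have \<delta>: "\<delta> > 0" "\<delta> \<le> 1/2" "\<delta> < d0" using d0 unfolding \<delta>_def by auto
  have uc: "norm (u' s - u' b) \<le> m / 2" if "s \<in> {-1..2}" "b \<in> {-1..2}" "\<bar>s - b\<bar> \<le> \<delta>" for s b
    using d0c[OF that(1,2)] that(3) \<delta> by (simp add: dist_norm)
  note sr = short_range[OF der mle uc]
  define K where "K = {0..1::real} \<times> {\<delta>..1-\<delta>}"
  define f where "f = (\<lambda>p. norm (u (fst p) - u (fst p + snd p)))"
  have "compact K" unfolding K_def by (intro compact_Times compact_Icc)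
  moreover have "K \<noteq> {}" unfolding K_def using \<delta> by auto
  moreover have "continuous_on K f" unfolding f_def
    by (intro continuous_intros continuous_on_compose2[OF contu]) auto
  ultimately obtain p0 where p0: "p0 \<in> K" "\<And>p. p \<in> K \<Longrightarrow> f p0 \<le> f p"
    using continuous_attains_inf[of K f] by metis
  define \<mu> where "\<mu> = f p0"
  have \<mu>: "\<mu> > 0"
  proof -
    obtain x0 h0 where p: "p0 = (x0, h0)" "\<delta> \<le> h0" "h0 \<le> 1 - \<delta>" using p0(1) unfolding K_def by auto
    have "\<delta> \<le> cdist x0 (x0 + h0)" by (rule cdist_lower) (use p in auto)
    then have "u x0 \<noteq> u (x0 + h0)" using inj \<delta>(1) unfolding inj_circle_def by fastforce
    then show ?thesis unfolding \<mu>_def f_def p by simp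
  qed
  define C where "C = max (2 / m) (1 / \<mu>)"
  have "bil u \<le> ereal C"
  proof (rule bil_le)
    fix x y assume c: "cdist x y \<noteq> 0"
    have c0: "cdist x y \<ge> 0" by (rule cdist_nonneg)
    have ne: "u x \<noteq> u y" using inj c unfolding inj_circle_def by blast
    have "cdist x y \<le> C * norm (u x - u y)"
    proof (cases "cdist x y < \<delta>")
      case True
      then obtain k where k: "k \<in> \<int>" "\<bar>x - y - k\<bar> < \<delta>" using cdist_less_ex by blast
      define x' where "x' = x + of_int (- floor x)"
      define y' where "y' = y + (k + of_int (- floor x))"
      have ux: "u x' = u x" unfolding x'_def by (rule periodic_int[OF per]) simp
      have uy: "u y' = u y" unfolding y'_def by (rule periodic_int[OF per]) (use k in simp)
      have x'r: "x' \<in> {0..1}" unfolding x'_def using of_int_floor_le[of x] real_of_int_floor_add_one_gt[of x] by (simp; linarith)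
      have xy: "x' - y' = x - y - k" unfolding x'_def y'_def by simp
      have y'r: "y' \<in> {-1..2}" using x'r xy k(2) \<delta> by auto
      have "m / 2 * \<bar>x' - y'\<bar> \<le> norm (u x' - u y')" by (rule sr) (use x'r y'r xy k \<delta> in auto)
      then have "m / 2 * cdist x y \<le> norm (u x - u y)"
      proof -
        have "m / 2 * cdist x y \<le> m / 2 * \<bar>x' - y'\<bar>"
          using xy cdist_le[OF k(1), of x y] m0 by (intro mult_left_mono) auto
        with \<open>m / 2 * \<bar>x' - y'\<bar> \<le> norm (u x' - u y')\<close> show ?thesis using ux uy by simp
      qed
      then have "cdist x y \<le> 2 / m * norm (u x - u y)" using m0 by (simp add: field_simps)
      moreover have "2 / m * norm (u x - u y) \<le> C * norm (u x - u y)"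
        unfolding C_def by (intro mult_right_mono) auto
      ultimately show ?thesis by linarith
    next
      case False
      define h where "h = frac (y - x)"
      define x0 where "x0 = frac x"
      have hr: "\<delta> \<le> h" "h \<le> 1 - \<delta>" using False cdist_frac1[of x y] cdist_frac2[of x y] unfolding h_def by auto
      have x0r: "x0 \<in> {0..1}" unfolding x0_def using frac_ge_0[of x] frac_lt_1[of x] by auto
      have ux: "u x0 = u x" unfolding x0_def frac_def
        using periodic_int[OF per, of "of_int (- floor x)" x] by simp
      have "y = x0 + h + of_int (floor x + floor (y - x))" unfolding x0_def h_def frac_def by simp
      then have uy: "u (x0 + h) = u y" using periodic_int[OF per, of "of_int (floor x + floor (y - x))" "x0 + h"] by simp
      have "(x0, h) \<in> K" unfolding K_def using x0r hr by auto
      from p0(2)[OF this] have "\<mu> \<le> norm (u x - u y)" unfolding \<mu>_def f_def using ux uy by simp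
      moreover have "cdist x y \<le> 1" using cdist_frac1[of x y] frac_lt_1[of "y - x"] by simp
      moreover have "\<mu> * cdist x y \<le> \<mu> * 1" using \<mu> \<open>cdist x y \<le> 1\<close> by (intro mult_left_mono) auto
      ultimately have "\<mu> * cdist x y \<le> norm (u x - u y)" by linarith
      then have "cdist x y \<le> 1 / \<mu> * norm (u x - u y)" using \<mu> by (simp add: field_simps)
      moreover have "1 / \<mu> * norm (u x - u y) \<le> C * norm (u x - u y)"
        unfolding C_def by (intro mult_right_mono) auto
      ultimately show ?thesis by linarith
    qed
    with ne show "u x \<noteq> u y \<and> cdist x y \<le> C * norm (u x - u y)" by simp
  qed
  then show ?thesis using order.strict_trans1 by fastforce
qed


theorem lemma3p6:
  fixes u :: "real \<Rightarrow> 'n::euclidean_space"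
  assumes "C1_closed_curve u"
  shows "((inj_circle u \<and> (INF t. norm (vector_derivative u (at t))) > 0) \<longleftrightarrow> bil u < \<infinity>)
    \<and> (bil u < \<infinity> \<longrightarrow>
         (\<forall>v :: real \<Rightarrow> 'n. C1_closed_curve v
           \<and> (SUP t. ereal (norm (vector_derivative (\<lambda>s. v s - u s) (at t))))
                 \<le> ereal (1 / (2 * real_of_ereal (bil u)))
           \<longrightarrow> bil v \<le> 2 * bil u))"
  using partA[OF assms] partB[OF assms] partC[OF assms] by blast

end
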